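(* Let $y$ be the solution of the problem $\varepsilon^2 y''(x)=f(x,y)$ on $(0,1)$, $y(0)=y(1)=0$, with $f$ and the Shishkin mesh $\{x_i\}_{i=0}^N$ as described in the context, and let $G$ be the discrete operator defined in the context. Assume that $\varepsilon\leqslant C_0/N$ for some constant $C_0>0$. Then there is a constant $C>0$ independent of $N$ and $\varepsilon$ such that $$|(Gy)_{N/4}|\leqslant\frac{C}{N},$$ where $(Gy)_{N/4}$ is the component with index $N/4$ (corresponding to the mesh point $x_{N/4}=\lambda$) of $G$ applied to the vector $(y(x_0),\ldots,y(x_N))^T$.
   Context: Problem: $\varepsilon^2y''(x)=f(x,y)$ on $(0,1)$, $y(0)=y(1)=0$, where $\varepsilon>0$ is a small parameter, $f\in C^k([0,1]\times\mathbb{R})$ for some $k\geq 2$, and $f_y=\partial f/\partial y\geq m>0$ on $[0,1]\times\mathbb{R}$ for a constant $m$; this problem has a unique solution $y$. Shishkin mesh: $N$ is a positive integer divisible by 4, $\lambda=\min\{1/4,\,2\varepsilon\ln N/\sqrt{m}\}$, and it is assumed that $\lambda=2\varepsilon\ln N/\sqrt{m}$. The mesh $0=x_0<x_1<\cdots<x_N=1$ is equidistant on each of $[0,\lambda]$ (with $N/4$ subintervals), $[\lambda,1-\lambda]$ (with $N/2$ subintervals) and $[1-\lambda,1]$ (with $N/4$ subintervals); thus $x_{N/4}=\lambda$, $x_{3N/4}=1-\lambda$, subintervals in $[0,\lambda]\cup[1-\lambda,1]$ have length $4\lambda/N$ and those in $[\lambda,1-\lambda]$ have length $2(1-2\lambda)/N$.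 Scheme: $\gamma$ is a constant with $\gamma\geq f_y$, and $\beta=\sqrt{\gamma}/\varepsilon$. For $i=1,\ldots,N$ let $\ell_i=x_i-x_{i-1}$, $d_i=\beta/\tanh(\beta\ell_i)$, $a_i=\beta/\sinh(\beta\ell_i)$, $\Delta d_i=d_i-a_i$. For $v=(v_0,\ldots,v_N)^T\in\mathbb{R}^{N+1}$ write $f_j=f(x_j,v_j)$ and define $Gv\in\mathbb{R}^{N+1}$ by $(Gv)_0=v_0$, $(Gv)_N=v_N$ and, for $i=1,\ldots,N-1$, $$(Gv)_i=\frac{\gamma}{\Delta d_i+\Delta d_{i+1}}\Big[(3a_i+d_i+\Delta d_{i+1})(v_{i-1}-v_i)-(3a_{i+1}+d_{i+1}+\Delta d_i)(v_i-v_{i+1})-\frac{f_{i-1}+2f_i+f_{i+1}}{\gamma}(\Delta d_i+\Delta d_{i+1})\Big].$$ *)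

theory Defs
  imports "HOL-Analysis.Analysis"
begin

text \<open>C^k regularity of a function of two real variables on a set S (derivatives taken
  within S, so that closed domains like [0,1] x R are allowed): g is C^0 if continuous on S,
  and C^(k+1) if it has on S a (Frechet) derivative whose two partial derivatives are C^k on S.\<close>
fun Ck_on :: "nat \<Rightarrow> (real \<times> real) set \<Rightarrow> (real \<times> real \<Rightarrow> real) \<Rightarrow> bool" where
  "Ck_on 0 S g = continuous_on S g"
| "Ck_on (Suc k) S g =
     (\<exists>g1 g2. (\<forall>p\<in>S. (g has_derivative (\<lambda>h. g1 p * fst h + g2 p * snd h)) (at p within S))
             \<and> Ck_on k S g1 \<and> Ck_on k S g2)"

definition is_solution :: "real \<Rightarrow> (real \<times> real \<Rightarrow> real) \<Rightarrow> (real \<Rightarrow> real) \<Rightarrow> bool" where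
  "is_solution \<epsilon> f y \<longleftrightarrow>
     continuous_on {0..1} y \<and> y 0 = 0 \<and> y 1 = 0 \<and>
     (\<exists>y' y''. \<forall>x\<in>{0<..<1}. (y has_real_derivative y' x) (at x) \<and>
                              (y' has_real_derivative y'' x) (at x) \<and>
                              \<epsilon>\<^sup>2 * y'' x = f (x, y x))"

definition shishkin_lambda :: "real \<Rightarrow> real \<Rightarrow> nat \<Rightarrow> real" where
  "shishkin_lambda \<epsilon> m N = 2 * \<epsilon> * ln (real N) / sqrt m"

definition shishkin_mesh :: "real \<Rightarrow> real \<Rightarrow> nat \<Rightarrow> nat \<Rightarrow> real" where
  "shishkin_mesh \<epsilon> m N i =
     (let lam = shishkin_lambda \<epsilon> m N in
      if i \<le> N div 4 then real i * (4 * lam / real N)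
      else if i \<le> 3 * N div 4 then lam + real (i - N div 4) * (2 * (1 - 2 * lam) / real N)
      else (1 - lam) + real (i - 3 * N div 4) * (4 * lam / real N))"

definition G_op :: "real \<Rightarrow> real \<Rightarrow> (real \<times> real \<Rightarrow> real) \<Rightarrow> nat \<Rightarrow> (nat \<Rightarrow> real)
                      \<Rightarrow> (nat \<Rightarrow> real) \<Rightarrow> nat \<Rightarrow> real" where
  "G_op \<gamma> \<epsilon> f N xs v i =
     (let \<beta> = sqrt \<gamma> / \<epsilon>;
          len = (\<lambda>j. xs j - xs (j - 1));
          d = (\<lambda>j. \<beta> / tanh (\<beta> * len j));
          a = (\<lambda>j. \<beta> / sinh (\<beta> * len j));
          dd = (\<lambda>j. d j - a j);
          fv = (\<lambda>j. f (xs j, v j))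
      in if i = 0 then v 0
         else if i = N then v N
         else \<gamma> / (dd i + dd (i + 1)) *
                ((3 * a i + d i + dd (i + 1)) * (v (i - 1) - v i)
                 - (3 * a (i + 1) + d (i + 1) + dd i) * (v i - v (i + 1))
                 - (fv (i - 1) + 2 * fv i + fv (i + 1)) / \<gamma> * (dd i + dd (i + 1))))"

end

theory Submission
  imports Defs
begin


lemma maxP:
  fixes \<psi> \<psi>1 \<psi>2 :: "real \<Rightarrow> real"
  assumes ab: "a \<le> b" and cont: "continuous_on {a..b} \<psi>" and pa: "\<psi> a \<le> 0" and pb: "\<psi> b \<le> 0"
    and d1: "\<And>x. a<x \<Longrightarrow> x<b \<Longrightarrow> (\<psi> has_real_derivative \<psi>1 x) (at x)"
    and d2: "\<And>x. a<x \<Longrightarrow> x<b \<Longrightarrow> (\<psi>1 has_real_derivative \<psi>2 x) (at x)"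
    and pos: "\<And>x. a<x \<Longrightarrow> x<b \<Longrightarrow> \<psi> x > 0 \<Longrightarrow> \<psi>2 x > 0"
    and x: "x \<in> {a..b}"
  shows "\<psi> x \<le> 0"
proof (rule ccontr)
  assume "\<not> \<psi> x \<le> 0"
  hence px: "\<psi> x > 0" by simp
  obtain p where p: "p \<in> {a..b}" and pmax: "\<forall>y\<in>{a..b}. \<psi> y \<le> \<psi> p"
    using continuous_attains_sup[of "{a..b}" \<psi>] cont ab by auto
  have pp: "\<psi> p > 0" using pmax x px by force
  have ap: "a < p" using pp pa p by (cases "p = a") auto
  have pb': "p < b" using pp pb p by (cases "p = b") auto
  have z: "\<psi>1 p = 0"
  proof (rule DERIV_local_max[OF d1[OF ap pb'], of "min (p-a) (b-p)"])
    show "0 < min (p - a) (b - p)" using ap pb' by simp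
    show "\<forall>y. \<bar>p - y\<bar> < min (p - a) (b - p) \<longrightarrow> \<psi> y \<le> \<psi> p"
      using pmax by (auto simp: abs_if split: if_splits)
  qed
  obtain d where d: "d > 0" and dinc: "\<forall>h>0. h < d \<longrightarrow> \<psi>1 p < \<psi>1 (p + h)"
    using DERIV_pos_inc_right[OF d2[OF ap pb'] pos[OF ap pb' pp]] by blast
  define t where "t = min (d/2) ((b-p)/2)"
  have t1: "t \<le> (b-p)/2" "t \<le> d/2" "t > 0" using d pb' unfolding t_def by (metis min.cobounded2, metis min.cobounded1, simp)
  have t3: "p + t < b" using t1(1) \<open>p < b\<close> by (simp add: field_simps)
  have t: "0 < t" "t < d" "p + t < b" using t1 d t3 by auto
  obtain l z where zz: "p < z" "z < p + t" "DERIV \<psi> z :> l" "\<psi> (p+t) - \<psi> p = (p + t - p) * l"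
  proof -
    have "\<exists>l z. p < z \<and> z < p + t \<and> DERIV \<psi> z :> l \<and> \<psi> (p+t) - \<psi> p = (p + t - p) * l"
    proof (rule MVT)
      show "p < p + t" using t by simp
      show "continuous_on {p..p + t} \<psi>" using cont by (rule continuous_on_subset) (use ap t in auto)
      show "\<And>x. p < x \<Longrightarrow> x < p + t \<Longrightarrow> \<psi> differentiable at x"
        using d1 ap t real_differentiable_def by (metis less_trans order.strict_trans)
    qed
    thus ?thesis using that by blast
  qed
  have "l = \<psi>1 z" using DERIV_unique[OF zz(3) d1] zz ap t by simp
  moreover have "\<psi>1 z > 0" using dinc[rule_format, of "z - p"] zz t z by simp
  ultimately have "t * l > 0" using t by simp
  hence "\<psi> (p+t) > \<psi> p" using zz(4) by simp
  moreover have "p + t \<in> {a..b}" using ap t by simp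
  ultimately show False using pmax by force
qed



lemma cmp_side:
  fixes y y1 y2 :: "real \<Rightarrow> real"
  assumes e: "\<epsilon> > 0" and g: "\<gamma> > 0" and pq: "p < q"
    and cont: "continuous_on {p..q} y"
    and d1: "\<And>x. p<x \<Longrightarrow> x<q \<Longrightarrow> (y has_real_derivative y1 x) (at x)"
    and d2: "\<And>x. p<x \<Longrightarrow> x<q \<Longrightarrow> (y1 has_real_derivative y2 x) (at x)"
    and le: "\<And>x. p<x \<Longrightarrow> x<q \<Longrightarrow> \<epsilon>\<^sup>2 * y2 x - \<gamma> * y x \<le> c"
  defines "\<beta> \<equiv> sqrt \<gamma> / \<epsilon>"
  defines "S \<equiv> sinh (\<beta> * (q - p))"
  defines "Cc \<equiv> cosh (\<beta> * (q - p))"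
  shows "(y has_real_derivative Dq) (at q) \<Longrightarrow> Dq \<le> (y q + c/\<gamma>) * \<beta> * Cc / S - (y p + c/\<gamma>) * \<beta> / S"
    and "(y has_real_derivative Dp) (at p) \<Longrightarrow> Dp \<ge> (y q + c/\<gamma>) * \<beta> / S - (y p + c/\<gamma>) * \<beta> * Cc / S"
proof -
  have b: "\<beta> > 0" using e g by (simp add: \<beta>_def)
  have eb: "\<epsilon>\<^sup>2 * \<beta>\<^sup>2 = \<gamma>" using e g by (simp add: \<beta>_def power_divide)
  have Sp: "S > 0" using b pq by (simp add: S_def)
  define A where "A = (y p + c/\<gamma>) / S"
  define B where "B = (y q + c/\<gamma>) / S"
  define u where "u = (\<lambda>x. - c/\<gamma> + A * sinh (\<beta> * (q - x)) + B * sinh (\<beta> * (x - p)))"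
  define u1 where "u1 = (\<lambda>x. - A * \<beta> * cosh (\<beta> * (q - x)) + B * \<beta> * cosh (\<beta> * (x - p)))"
  define u2 where "u2 = (\<lambda>x. \<beta>\<^sup>2 * (u x + c/\<gamma>))"
  have du1: "(u has_real_derivative u1 x) (at x)" for x
    unfolding u_def u1_def by (auto intro!: derivative_eq_intros simp: algebra_simps)
  have du2: "(u1 has_real_derivative u2 x) (at x)" for x
    unfolding u_def u1_def u2_def by (auto intro!: derivative_eq_intros simp: algebra_simps power2_eq_square)
  have up: "u p = y p" using Sp b pq by (simp add: u_def A_def S_def)
  have uq: "u q = y q" using Sp b pq by (simp add: u_def B_def S_def)
  define \<psi> where "\<psi> = (\<lambda>x. u x - y x)"
  have contu: "continuous_on {p..q} u" unfolding u_def by (intro continuous_intros)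
  have psi_le: "\<psi> x \<le> 0" if "x \<in> {p..q}" for x
  proof (rule maxP[of p q \<psi> "\<lambda>x. u1 x - y1 x" "\<lambda>x. u2 x - y2 x"])
    show "p \<le> q" using pq by simp
    show "continuous_on {p..q} \<psi>" unfolding \<psi>_def using contu cont by (intro continuous_intros)
    show "\<psi> p \<le> 0" "\<psi> q \<le> 0" using up uq by (simp_all add: \<psi>_def)
    show "(\<psi> has_real_derivative u1 x - y1 x) (at x)" if "p < x" "x < q" for x
      unfolding \<psi>_def using du1 d1[OF that] by (intro derivative_intros)
    show "((\<lambda>x. u1 x - y1 x) has_real_derivative u2 x - y2 x) (at x)" if "p < x" "x < q" for x
      using du2 d2[OF that] by (intro derivative_intros)
    show "u2 x - y2 x > 0" if "p < x" "x < q" "\<psi> x > 0" for x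
    proof -
      have "\<epsilon>\<^sup>2 * u2 x = \<gamma> * u x + c" using eb g
        by (simp add: u2_def algebra_simps)
      hence "\<epsilon>\<^sup>2 * (u2 x - y2 x) \<ge> \<gamma> * \<psi> x" using le[OF that(1,2)] by (simp add: \<psi>_def algebra_simps)
      moreover have "\<gamma> * \<psi> x > 0" using g that(3) by simp
      ultimately have "\<epsilon>\<^sup>2 * (u2 x - y2 x) > 0" by linarith
      thus ?thesis using e by (simp add: zero_less_mult_iff)
    qed
  qed (use that in auto)
  have u1q: "u1 q = (y q + c/\<gamma>) * \<beta> * Cc / S - (y p + c/\<gamma>) * \<beta> / S"
    by (simp add: u1_def A_def B_def Cc_def)
  have u1p: "u1 p = (y q + c/\<gamma>) * \<beta> / S - (y p + c/\<gamma>) * \<beta> * Cc / S"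
    by (simp add: u1_def A_def B_def Cc_def)
  show "Dq \<le> (y q + c/\<gamma>) * \<beta> * Cc / S - (y p + c/\<gamma>) * \<beta> / S" if dq: "(y has_real_derivative Dq) (at q)"
  proof (rule ccontr)
    assume "\<not> ?thesis"
    hence "u1 q - Dq < 0" using u1q by simp
    from DERIV_neg_dec_left[OF DERIV_diff[OF du1 dq] this]
    obtain dd where dd: "dd > 0" "\<forall>h>0. h < dd \<longrightarrow> u q - y q < u (q - h) - y (q - h)" by blast
    define h where "h = min (dd/2) (q - p)"
    have h: "h > 0" "h < dd" "h \<le> q - p" using dd pq unfolding h_def by (auto simp: min_def)
    have "\<psi> (q - h) > 0" using dd(2)[rule_format, OF h(1,2)] up uq by (simp add: \<psi>_def)
    moreover have "\<psi> (q - h) \<le> 0" using psi_le h by simp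
    ultimately show False by simp
  qed
  show "Dp \<ge> (y q + c/\<gamma>) * \<beta> / S - (y p + c/\<gamma>) * \<beta> * Cc / S" if dp: "(y has_real_derivative Dp) (at p)"
  proof (rule ccontr)
    assume "\<not> ?thesis"
    hence "u1 p - Dp > 0" using u1p by simp
    from DERIV_pos_inc_right[OF DERIV_diff[OF du1 dp] this]
    obtain dd where dd: "dd > 0" "\<forall>h>0. h < dd \<longrightarrow> u p - y p < u (p + h) - y (p + h)" by blast
    define h where "h = min (dd/2) (q - p)"
    have h: "h > 0" "h < dd" "h \<le> q - p" using dd pq unfolding h_def by (auto simp: min_def)
    have "\<psi> (p + h) > 0" using dd(2)[rule_format, OF h(1,2)] up uq by (simp add: \<psi>_def)
    moreover have "\<psi> (p + h) \<le> 0" using psi_le h by simp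
    ultimately show False by simp
  qed
qed



lemma ck_cont: "Ck_on j S g \<Longrightarrow> continuous_on S g"
  by (cases j) (auto intro: has_derivative_continuous_on)

lemma cont_bound:
  fixes g :: "'a::topological_space \<Rightarrow> real"
  assumes "compact K" "continuous_on K g"
  shows "\<exists>B\<ge>0. \<forall>p\<in>K. \<bar>g p\<bar> \<le> B"
proof -
  have "bounded (g ` K)" using assms compact_continuous_image compact_imp_bounded by blast
  then obtain a where "\<forall>x\<in>g ` K. norm x \<le> a" by (auto simp: bounded_iff)
  thus ?thesis by (intro exI[of _ "max a 0"]) auto
qed

lemma fx_deriv:
  fixes f :: "real \<times> real \<Rightarrow> real"
  assumes "Ck_on (Suc j) ({0..1} \<times> UNIV) f"
  shows "\<exists>g1. continuous_on ({0..1} \<times> UNIV) g1 \<and>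
     (\<forall>x\<in>{0..1}. \<forall>u. ((\<lambda>t. f (t, u)) has_real_derivative g1 (x, u)) (at x within {0..1}))"
proof -
  obtain g1 g2 where d: "\<forall>p\<in>{0..1} \<times> UNIV. (f has_derivative (\<lambda>h. g1 p * fst h + g2 p * snd h)) (at p within {0..1} \<times> UNIV)"
    and c: "Ck_on j ({0..1} \<times> UNIV) g1" using assms by auto
  have "((\<lambda>t. f (t, u)) has_real_derivative g1 (x, u)) (at x within {0..1})" if x: "x \<in> {0..1}" for x u
  proof -
    have "((\<lambda>t. f (t, u)) has_derivative (\<lambda>h. g1 (x,u) * fst (h, 0::real) + g2 (x,u) * snd (h, 0::real))) (at x within {0..1})"
      by (rule has_derivative_in_compose2[of "{0..1} \<times> UNIV" f "\<lambda>p h. g1 p * fst h + g2 p * snd h" "\<lambda>t. (t, u)" "{0..1}" x "\<lambda>h. (h, 0)"])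
         (use d x in \<open>auto intro!: derivative_eq_intros\<close>)
    moreover have "(\<lambda>h. h * g1 (x, u)) = (*) (g1 (x, u))" by (auto simp: mult.commute)
    ultimately show ?thesis by (simp add: has_field_derivative_def)
  qed
  thus ?thesis using ck_cont[OF c] by blast
qed

lemma lip_x:
  fixes f :: "real \<times> real \<Rightarrow> real"
  assumes "Ck_on (Suc j) ({0..1} \<times> UNIV) f"
  shows "\<exists>B\<ge>0. \<forall>x\<in>{0..1}. \<forall>x'\<in>{0..1}. \<forall>u. \<bar>u\<bar> \<le> M \<longrightarrow> \<bar>f (x,u) - f (x',u)\<bar> \<le> B * \<bar>x - x'\<bar>"
proof -
  obtain g1 where c: "continuous_on ({0..1} \<times> UNIV) g1"
    and d: "\<forall>x\<in>{0..1}. \<forall>u. ((\<lambda>t. f (t, u)) has_real_derivative g1 (x, u)) (at x within {0..1})"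
    using fx_deriv[OF assms] by blast
  have "compact ({0..1::real} \<times> {-M..M})" by (intro compact_Times compact_Icc)
  moreover have "continuous_on ({0..1::real} \<times> {-M..M}) g1" by (rule continuous_on_subset[OF c]) auto
  ultimately obtain B where B: "B \<ge> 0" "\<forall>p\<in>{0..1} \<times> {-M..M}. \<bar>g1 p\<bar> \<le> B" using cont_bound by blast
  have "\<bar>f (x,u) - f (x',u)\<bar> \<le> B * \<bar>x - x'\<bar>" if "x \<in> {0..1}" "x' \<in> {0..1}" "\<bar>u\<bar> \<le> M" for x x' u
  proof -
    have "norm ((\<lambda>t. f (t, u)) x - (\<lambda>t. f (t, u)) x') \<le> B * norm (x - x')"
    proof (rule field_differentiable_bound[of "{0..1}"])
      show "convex {0..1::real}" by simp
      show "\<And>z. z \<in> {0..1} \<Longrightarrow> ((\<lambda>t. f (t, u)) has_field_derivative g1 (z, u)) (at z within {0..1})"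
        using d by blast
      show "\<And>z. z \<in> {0..1} \<Longrightarrow> norm (g1 (z, u)) \<le> B" using B(2) that(3) by (auto simp: abs_le_iff)
    qed (use that in auto)
    thus ?thesis by simp
  qed
  thus ?thesis using B(1) by blast
qed

lemma fu_mvt:
  fixes f :: "real \<times> real \<Rightarrow> real"
  assumes hfy: "\<forall>x\<in>{0..1}. \<forall>u. ((\<lambda>w. f (x, w)) has_real_derivative fy x u) (at u)"
    and hfym: "\<forall>x\<in>{0..1}. \<forall>u. fy x u \<ge> m"
    and hgamma: "\<forall>x\<in>{0..1}. \<forall>u. \<gamma> \<ge> fy x u"
    and x: "x \<in> {0..1}"
  shows "\<exists>b. m \<le> b \<and> b \<le> \<gamma> \<and> f (x,u) - f (x,v) = b * (u - v)"
proof -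
  have gen: "\<exists>b. m \<le> b \<and> b \<le> \<gamma> \<and> f (x,u) - f (x,v) = b * (u - v)" if uv: "v < u" for u v
  proof -
    have "\<exists>l z. v < z \<and> z < u \<and> DERIV (\<lambda>w. f (x, w)) z :> l \<and> f (x,u) - f (x,v) = (u - v) * l"
    proof (rule MVT[OF uv])
      show "continuous_on {v..u} (\<lambda>w. f (x, w))"
        using hfy x by (intro DERIV_continuous_on[where D="\<lambda>w. fy x w"]) (blast intro: has_field_derivative_at_within)
      show "\<And>z. v < z \<Longrightarrow> z < u \<Longrightarrow> (\<lambda>w. f (x, w)) differentiable at z"
        using hfy x real_differentiable_def by blast
    qed
    then obtain l z where "DERIV (\<lambda>w. f (x, w)) z :> l" "f (x,u) - f (x,v) = (u - v) * l" by blast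
    moreover have "l = fy x z" using DERIV_unique[OF calculation(1)] hfy x by blast
    ultimately show ?thesis using hfym hgamma x by (intro exI[of _ l]) (auto simp: mult.commute)
  qed
  show ?thesis
  proof (cases u v rule: linorder_cases)
    case less
    then obtain b where "m \<le> b \<and> b \<le> \<gamma> \<and> f (x,v) - f (x,u) = b * (v - u)" using gen by blast
    thus ?thesis by (intro exI[of _ b]) (auto simp: algebra_simps)
  next
    case equal
    have "m \<le> fy x 0" "fy x 0 \<le> \<gamma>" using hfym hgamma x by auto
    thus ?thesis using equal by (intro exI[of _ m]) auto
  next
    case greater
    thus ?thesis using gen by blast
  qed
qed



lemma ybound:
  fixes f :: "real \<times> real \<Rightarrow> real" and y y1 y2 :: "real \<Rightarrow> real"
  assumes e: "\<epsilon> > 0" and m: "m > 0" and cont: "continuous_on {0..1} y"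
    and y0: "y 0 = 0" and y1: "y 1 = 0"
    and d1: "\<And>x. 0<x \<Longrightarrow> x<1 \<Longrightarrow> (y has_real_derivative y1 x) (at x)"
    and d2: "\<And>x. 0<x \<Longrightarrow> x<1 \<Longrightarrow> (y1 has_real_derivative y2 x) (at x)"
    and eq: "\<And>x. 0<x \<Longrightarrow> x<1 \<Longrightarrow> \<epsilon>\<^sup>2 * y2 x = f (x, y x)"
    and fu: "\<And>x u v. x \<in> {0..1} \<Longrightarrow> \<exists>b. m \<le> b \<and> f (x,u) - f (x,v) = b * (u - v)"
    and B0: "\<And>x. x \<in> {0..1} \<Longrightarrow> \<bar>f (x,0)\<bar> \<le> B0"
    and x: "x \<in> {0..1}"
  shows "\<bar>y x\<bar> \<le> B0 / m"
proof -
  have B0p: "B0 \<ge> 0" using B0[of 0] by auto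
  have M0: "B0 / m \<ge> 0" using B0p m by simp
  have up: "y x - B0/m \<le> 0"
  proof (rule maxP[of 0 1 "\<lambda>s. y s - B0/m" y1 y2])
    show "continuous_on {0..1} (\<lambda>s. y s - B0 / m)" using cont by (intro continuous_intros)
    show "((\<lambda>s. y s - B0 / m) has_real_derivative y1 s) (at s)" if "0 < s" "s < 1" for s
      using d1[OF that] by (auto intro!: derivative_eq_intros)
    show "y2 s > 0" if s: "0 < s" "s < 1" and ps: "y s - B0 / m > 0" for s
    proof -
      obtain b where b: "m \<le> b" "f (s, y s) - f (s, 0) = b * (y s - 0)" using fu[of s "y s" 0] s by auto
      have "y s > B0 / m" using ps by simp
      hence "m * y s > B0" using m by (simp add: field_simps)
      moreover have "b * y s \<ge> m * y s" using b(1) ps M0 by (intro mult_right_mono) auto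
      moreover have "f (s,0) \<ge> - B0" using B0[of s] s by auto
      ultimately have "\<epsilon>\<^sup>2 * y2 s > 0" using eq[OF s] b(2) by simp
      thus ?thesis using e by (simp add: zero_less_mult_iff)
    qed
  qed (use d2 y0 y1 M0 x in auto)
  have lo: "- y x - B0/m \<le> 0"
  proof (rule maxP[of 0 1 "\<lambda>s. - y s - B0/m" "\<lambda>s. - y1 s" "\<lambda>s. - y2 s"])
    show "continuous_on {0..1} (\<lambda>s. - y s - B0 / m)" using cont by (intro continuous_intros)
    show "((\<lambda>s. - y s - B0 / m) has_real_derivative - y1 s) (at s)" if "0 < s" "s < 1" for s
      using d1[OF that] by (auto intro!: derivative_eq_intros)
    show "((\<lambda>s. - y1 s) has_real_derivative - y2 s) (at s)" if "0 < s" "s < 1" for s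
      using d2[OF that] by (auto intro!: derivative_eq_intros)
    show "- y2 s > 0" if s: "0 < s" "s < 1" and ps: "- y s - B0 / m > 0" for s
    proof -
      obtain b where b: "m \<le> b" "f (s, y s) - f (s, 0) = b * (y s - 0)" using fu[of s "y s" 0] s by auto
      have "- y s > B0 / m" using ps by simp
      hence "m * (- y s) > B0" using m by (simp add: field_simps)
      moreover have "b * (- y s) \<ge> m * (- y s)" using b(1) ps M0 by (intro mult_right_mono) auto
      moreover have "f (s,0) \<le> B0" using B0[of s] s by auto
      ultimately have "\<epsilon>\<^sup>2 * (- y2 s) > 0" using eq[OF s] b(2) by simp
      thus ?thesis using e by (simp add: mult_less_0_iff)
    qed
  qed (use y0 y1 M0 x in auto)
  show ?thesis using up lo by auto
qed



lemma ydiff: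
  fixes f :: "real \<times> real \<Rightarrow> real" and y y1 y2 :: "real \<Rightarrow> real"
  assumes e: "\<epsilon> > 0" and m: "m > 0" and cont: "continuous_on {0..1} y"
    and y0: "y 0 = 0" and y1: "y 1 = 0"
    and d1: "\<And>x. 0<x \<Longrightarrow> x<1 \<Longrightarrow> (y has_real_derivative y1 x) (at x)"
    and d2: "\<And>x. 0<x \<Longrightarrow> x<1 \<Longrightarrow> (y1 has_real_derivative y2 x) (at x)"
    and eq: "\<And>x. 0<x \<Longrightarrow> x<1 \<Longrightarrow> \<epsilon>\<^sup>2 * y2 x = f (x, y x)"
    and fu: "\<And>x u v. x \<in> {0..1} \<Longrightarrow> \<exists>b. m \<le> b \<and> f (x,u) - f (x,v) = b * (u - v)"
    and Mb: "\<And>x. x \<in> {0..1} \<Longrightarrow> \<bar>y x\<bar> \<le> M"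
    and B1: "B1 \<ge> 0"
    and lip: "\<And>x x' u. x \<in> {0..1} \<Longrightarrow> x' \<in> {0..1} \<Longrightarrow> \<bar>u\<bar> \<le> M \<Longrightarrow> \<bar>f (x,u) - f (x',u)\<bar> \<le> B1 * \<bar>x - x'\<bar>"
    and \<delta>: "0 < \<delta>" "\<delta> < 1" and x: "0 \<le> x" "x \<le> 1 - \<delta>"
  shows "\<bar>y (x+\<delta>) - y x\<bar> \<le> B1*\<delta>/m + 2*M*(exp (-(sqrt m * x/\<epsilon>)) + exp (-(sqrt m*(1-\<delta>-x)/\<epsilon>)))"
proof -
  have M0: "M \<ge> 0" using Mb[of 0] by auto
  define E1 where "E1 = (\<lambda>s. exp (-(sqrt m * s/\<epsilon>)))"
  define E2 where "E2 = (\<lambda>s. exp (-(sqrt m*(1-\<delta>-s)/\<epsilon>)))"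
  define \<Phi> where "\<Phi> = (\<lambda>s. B1*\<delta>/m + 2*M*(E1 s + E2 s))"
  define \<Phi>1 where "\<Phi>1 = (\<lambda>s. 2*M*(-(sqrt m/\<epsilon>) * E1 s + (sqrt m/\<epsilon>) * E2 s))"
  define \<Phi>2 where "\<Phi>2 = (\<lambda>s. 2*M*(m/\<epsilon>\<^sup>2) * (E1 s + E2 s))"
  have dP1: "(\<Phi> has_real_derivative \<Phi>1 s) (at s)" for s
    unfolding \<Phi>_def \<Phi>1_def E1_def E2_def using e
    by (auto intro!: derivative_eq_intros simp: algebra_simps)
  have sm: "sqrt m * (sqrt m * z) = m * z" for z using m by (simp add: mult.assoc[symmetric])
  have dP2: "(\<Phi>1 has_real_derivative \<Phi>2 s) (at s)" for s
    unfolding \<Phi>2_def \<Phi>1_def E1_def E2_def using m e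
    by (auto intro!: derivative_eq_intros simp: algebra_simps power2_eq_square sm)
  have Phi_pos: "\<Phi> s \<ge> 2 * M * E1 s + 2 * M * E2 s" for s
    unfolding \<Phi>_def using B1 m \<delta> by (simp add: algebra_simps)
  have eP: "\<epsilon>\<^sup>2 * \<Phi>2 s = m * \<Phi> s - B1 * \<delta>" for s
    unfolding \<Phi>2_def \<Phi>_def using m e by (simp add: field_simps power2_eq_square)
  have key: "\<sigma> * (y (x+\<delta>) - y x) \<le> \<Phi> x" if \<sigma>: "\<sigma> = 1 \<or> \<sigma> = -1" for \<sigma>
  proof -
    have "\<sigma> * (y (x+\<delta>) - y x) - \<Phi> x \<le> 0"
    proof (rule maxP[of 0 "1-\<delta>" "\<lambda>s. \<sigma> * (y (s+\<delta>) - y s) - \<Phi> s"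
          "\<lambda>s. \<sigma> * (y1 (s+\<delta>) - y1 s) - \<Phi>1 s" "\<lambda>s. \<sigma> * (y2 (s+\<delta>) - y2 s) - \<Phi>2 s"])
      show "0 \<le> 1 - \<delta>" using \<delta> by simp
      have c1: "continuous_on {0..1-\<delta>} (\<lambda>s. y (s+\<delta>))"
        by (rule continuous_on_compose2[OF cont]) (use \<delta> in \<open>auto intro!: continuous_intros\<close>)
      have c2: "continuous_on {0..1-\<delta>} y" by (rule continuous_on_subset[OF cont]) (use \<delta> in auto)
      have c3: "continuous_on {0..1-\<delta>} \<Phi>" using dP1 
        by (intro DERIV_continuous_on[where D=\<Phi>1]) (blast intro: has_field_derivative_at_within)
      show "continuous_on {0..1-\<delta>} (\<lambda>s. \<sigma> * (y (s+\<delta>) - y s) - \<Phi> s)"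
        using c1 c2 c3 by (intro continuous_intros)
      have E1_0: "E1 0 = 1" and E2_1: "E2 (1-\<delta>) = 1" by (simp_all add: E1_def E2_def)
      have "\<sigma> * (y (0+\<delta>) - y 0) \<le> M" using Mb[of \<delta>] \<delta> \<sigma> y0 by (auto simp: abs_le_iff)
      moreover have "\<Phi> 0 \<ge> 2 * M"
      proof -
        have "2*M*E2 0 \<ge> 0" using M0 by (simp add: E2_def)
        thus ?thesis using Phi_pos[of 0] E1_0 by simp
      qed
      ultimately show "\<sigma> * (y (0+\<delta>) - y 0) - \<Phi> 0 \<le> 0" using M0 by linarith
      have "\<sigma> * (y ((1-\<delta>)+\<delta>) - y (1-\<delta>)) \<le> M" using Mb[of "1-\<delta>"] \<delta> \<sigma> y1 by (auto simp: abs_le_iff)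
      moreover have "\<Phi> (1-\<delta>) \<ge> 2 * M"
      proof -
        have "2*M*E1 (1-\<delta>) \<ge> 0" using M0 by (simp add: E1_def)
        thus ?thesis using Phi_pos[of "1-\<delta>"] E2_1 by simp
      qed
      ultimately show "\<sigma> * (y ((1-\<delta>)+\<delta>) - y (1-\<delta>)) - \<Phi> (1-\<delta>) \<le> 0" using M0 by linarith
      show "((\<lambda>s. \<sigma> * (y (s+\<delta>) - y s) - \<Phi> s) has_real_derivative \<sigma> * (y1 (s+\<delta>) - y1 s) - \<Phi>1 s) (at s)"
        if "0 < s" "s < 1 - \<delta>" for s
      proof -
        have "((\<lambda>s. y (s+\<delta>)) has_real_derivative y1 (s+\<delta>)) (at s)"
          using d1[of "s+\<delta>"] that \<delta> DERIV_shift by auto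
        thus ?thesis using d1[of s] that \<delta> dP1[of s] by (auto intro!: derivative_eq_intros)
      qed
      show "((\<lambda>s. \<sigma> * (y1 (s+\<delta>) - y1 s) - \<Phi>1 s) has_real_derivative \<sigma> * (y2 (s+\<delta>) - y2 s) - \<Phi>2 s) (at s)"
        if "0 < s" "s < 1 - \<delta>" for s
      proof -
        have "((\<lambda>s. y1 (s+\<delta>)) has_real_derivative y2 (s+\<delta>)) (at s)"
          using d2[of "s+\<delta>"] that \<delta> DERIV_shift by auto
        thus ?thesis using d2[of s] that \<delta> dP2[of s] by (auto intro!: derivative_eq_intros)
      qed
      show "\<sigma> * (y2 (s+\<delta>) - y2 s) - \<Phi>2 s > 0"
        if s: "0 < s" "s < 1 - \<delta>" and ps: "\<sigma> * (y (s+\<delta>) - y s) - \<Phi> s > 0" for s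
      proof -
        define Y where "Y = y (s+\<delta>)"
        define w where "w = \<sigma> * (Y - y s)"
        have s01: "s \<in> {0..1}" "s+\<delta> \<in> {0..1}" using s \<delta> by auto
        have YM: "\<bar>Y\<bar> \<le> M" using Mb s01 by (simp add: Y_def)
        have L: "\<bar>f (s+\<delta>, Y) - f (s, Y)\<bar> \<le> B1 * \<delta>" using lip[OF s01(2) s01(1) YM] \<delta> by simp
        have L2: "\<sigma> * (f (s+\<delta>, Y) - f (s, Y)) \<ge> - (B1 * \<delta>)" using L \<sigma> by (auto simp: abs_le_iff)
        obtain b where b: "m \<le> b" "f (s, Y) - f (s, y s) = b * (Y - y s)" using fu[of s Y "y s"] s01 by auto
        have "\<epsilon>\<^sup>2 * (\<sigma> * (y2 (s+\<delta>) - y2 s)) = \<sigma> * (f (s+\<delta>, Y) - f (s, y s))"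
          using eq[of s] eq[of "s+\<delta>"] s \<delta> by (simp add: Y_def algebra_simps)
        also have "\<dots> = \<sigma> * (f (s+\<delta>, Y) - f (s, Y)) + \<sigma> * (f (s, Y) - f (s, y s))" by (simp add: algebra_simps)
        also have "\<sigma> * (f (s, Y) - f (s, y s)) = b * w" unfolding b(2) w_def by (simp add: algebra_simps)
        finally have A: "\<epsilon>\<^sup>2 * (\<sigma> * (y2 (s+\<delta>) - y2 s)) \<ge> - (B1 * \<delta>) + b * w" using L2 by linarith
        have "2*M*E1 s \<ge> 0" "2*M*E2 s \<ge> 0" using M0 by (simp_all add: E1_def E2_def)
        hence Pp: "\<Phi> s \<ge> 0" using Phi_pos[of s] by linarith
        have wP: "w > \<Phi> s" using ps by (simp add: w_def Y_def)
        have "b * w \<ge> m * w" using b(1) wP Pp by (intro mult_right_mono) auto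
        hence "\<epsilon>\<^sup>2 * (\<sigma> * (y2 (s+\<delta>) - y2 s) - \<Phi>2 s) \<ge> m * (w - \<Phi> s)"
          using A eP[of s] by (simp add: algebra_simps)
        moreover have "m * (w - \<Phi> s) > 0" using m wP by simp
        ultimately have "\<epsilon>\<^sup>2 * (\<sigma> * (y2 (s+\<delta>) - y2 s) - \<Phi>2 s) > 0" by linarith
        thus ?thesis using e by (simp add: zero_less_mult_iff)
      qed
    qed (use x in auto)
    thus ?thesis by simp
  qed
  have "y (x+\<delta>) - y x \<le> \<Phi> x" using key[of 1] by simp
  moreover have "-(y (x+\<delta>) - y x) \<le> \<Phi> x" using key[of "-1"] by simp
  ultimately show ?thesis by (simp add: \<Phi>_def E1_def E2_def abs_le_iff)
qed



lemma final_alg: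
  fixes aL dL aR dR ym y0 yp fm f0 fp \<gamma> W D :: real
  assumes g: "\<gamma> > 0" and sL: "dL - aL > 0" and sR: "dR - aR > 0"
    and Lp: "D \<le> (y0 + (f0 - \<gamma>*y0 + W)/\<gamma>)*dL - (ym + (f0 - \<gamma>*y0 + W)/\<gamma>)*aL"
    and Rp: "D \<ge> (yp + (f0 - \<gamma>*y0 + W)/\<gamma>)*aR - (y0 + (f0 - \<gamma>*y0 + W)/\<gamma>)*dR"
    and Lm: "D \<ge> (y0 + (f0 - \<gamma>*y0 - W)/\<gamma>)*dL - (ym + (f0 - \<gamma>*y0 - W)/\<gamma>)*aL"
    and Rm: "D \<le> (yp + (f0 - \<gamma>*y0 - W)/\<gamma>)*aR - (y0 + (f0 - \<gamma>*y0 - W)/\<gamma>)*dR"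
    and om: "\<bar>(fm - \<gamma>*ym) - (f0 - \<gamma>*y0)\<bar> \<le> W"
    and op: "\<bar>(fp - \<gamma>*yp) - (f0 - \<gamma>*y0)\<bar> \<le> W"
  shows "\<bar>\<gamma> / ((dL-aL)+(dR-aR)) * ((3*aL + dL + (dR-aR))*(ym-y0) - (3*aR+dR+(dL-aL))*(y0-yp)
           - (fm+2*f0+fp)/\<gamma>*((dL-aL)+(dR-aR)))\<bar> \<le> 6*W"
proof -
  define S where "S = (dL-aL)+(dR-aR)"
  have S: "S > 0" using sL sR by (simp add: S_def)
  define cp where "cp = (f0 - \<gamma>*y0 + W)/\<gamma>"
  define cm where "cm = (f0 - \<gamma>*y0 - W)/\<gamma>"
  define T where "T = aL*ym - (dL+dR)*y0 + aR*yp"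
  have Lp': "D \<le> y0*dL + cp*dL - ym*aL - cp*aL" using Lp unfolding cp_def[symmetric] by (simp add: algebra_simps)
  have Rp': "D \<ge> yp*aR + cp*aR - y0*dR - cp*dR" using Rp unfolding cp_def[symmetric] by (simp add: algebra_simps)
  have Lm': "D \<ge> y0*dL + cm*dL - ym*aL - cm*aL" using Lm unfolding cm_def[symmetric] by (simp add: algebra_simps)
  have Rm': "D \<le> yp*aR + cm*aR - y0*dR - cm*dR" using Rm unfolding cm_def[symmetric] by (simp add: algebra_simps)
  have T1: "T \<le> cp * S" using Lp' Rp' unfolding T_def S_def by (simp add: algebra_simps)
  have T2: "T \<ge> cm * S" using Lm' Rm' unfolding T_def S_def by (simp add: algebra_simps)
  have "T / S \<le> cp" using T1 S by (simp add: divide_le_eq mult.commute)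
  hence U1: "\<gamma> * (T / S) \<le> f0 - \<gamma>*y0 + W" using g by (simp add: cp_def mult_left_mono field_simps)
  have "T / S \<ge> cm" using T2 S by (simp add: le_divide_eq mult.commute)
  hence U2: "\<gamma> * (T / S) \<ge> f0 - \<gamma>*y0 - W" using g by (simp add: cm_def mult_left_mono field_simps)
  have eqn: "\<gamma> / S * ((3*aL + dL + (dR-aR))*(ym-y0) - (3*aR+dR+(dL-aL))*(y0-yp) - (fm+2*f0+fp)/\<gamma>*S)
      = 4 * (\<gamma> * (T / S)) - ((fm - \<gamma>*ym) + 2*(f0 - \<gamma>*y0) + (fp - \<gamma>*yp))"
  proof -
    define X where "X = 4*y0 + (ym - 2*y0 + yp) - (fm+2*f0+fp)/\<gamma>"
    have "(3*aL + dL + (dR-aR))*(ym-y0) - (3*aR+dR+(dL-aL))*(y0-yp) - (fm+2*f0+fp)/\<gamma>*S = 4*T + S*X"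
      unfolding X_def T_def S_def by (simp add: algebra_simps)
    hence "\<gamma> / S * ((3*aL + dL + (dR-aR))*(ym-y0) - (3*aR+dR+(dL-aL))*(y0-yp) - (fm+2*f0+fp)/\<gamma>*S)
       = 4 * (\<gamma> * (T / S)) + \<gamma> * X" using S by (simp add: field_simps)
    also have "\<gamma> * X = \<gamma>*(ym + 2*y0 + yp) - (fm+2*f0+fp)" using g unfolding X_def by (simp add: field_simps)
    finally show ?thesis by (simp add: algebra_simps)
  qed
  show ?thesis unfolding S_def[symmetric] eqn using U1 U2 om op by (simp add: abs_le_iff)
qed



lemma dd_pos:
  fixes \<beta> l :: real
  assumes "\<beta> > 0" "l > 0"
  shows "\<beta> / tanh (\<beta>*l) - \<beta> / sinh (\<beta>*l) > 0"
proof -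
  have t: "\<beta>*l > 0" using assms by simp
  have c: "cosh (\<beta>*l) > 1" using cosh_real_ge_1[of "\<beta>*l"] cosh_real_one_iff[of "\<beta>*l"] t by linarith
  have s: "sinh (\<beta>*l) > 0" using t by simp
  have "\<beta> / tanh (\<beta>*l) - \<beta> / sinh (\<beta>*l) = \<beta> * (cosh (\<beta>*l) - 1) / sinh (\<beta>*l)"
    using s by (simp add: tanh_def diff_divide_distrib right_diff_distrib)
  also have "\<dots> > 0" using c s assms by simp
  finally show ?thesis .
qed

lemma exp_inv_bound:
  fixes z :: real
  assumes "z > 0"
  shows "exp (-z) \<le> 1 / z"
proof -
  have "exp z \<ge> 1 + z" by (rule exp_ge_add_one_self)
  hence "exp z \<ge> z" by linarith
  thus ?thesis using assms by (simp add: exp_minus field_simps)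
qed

lemma mesh_vals:
  fixes \<epsilon> m :: real and N :: nat
  assumes "N = 4 * i" "i \<ge> 1"
  defines "lam \<equiv> 2 * \<epsilon> * ln (real N) / sqrt m"
  shows "shishkin_mesh \<epsilon> m N (i - 1) = lam - 4*lam/real N"
    and "shishkin_mesh \<epsilon> m N i = lam"
    and "shishkin_mesh \<epsilon> m N (i + 1) = lam + 2*(1-2*lam)/real N"
proof -
  have Nd: "N div 4 = i" "3 * N div 4 = 3 * i" using assms(1) by auto
  have rN: "real N = 4 * real i" using assms(1) by simp
  have ip: "real i > 0" using assms(2) by simp
  show "shishkin_mesh \<epsilon> m N (i - 1) = lam - 4*lam/real N"
    unfolding shishkin_mesh_def shishkin_lambda_def Let_def lam_def[symmetric] Nd
    using assms(2) ip by (simp add: rN of_nat_diff field_simps)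
  show "shishkin_mesh \<epsilon> m N i = lam"
    unfolding shishkin_mesh_def shishkin_lambda_def Let_def lam_def[symmetric] Nd
    using ip by (simp add: rN field_simps)
  show "shishkin_mesh \<epsilon> m N (i + 1) = lam + 2*(1-2*lam)/real N"
    unfolding shishkin_mesh_def shishkin_lambda_def Let_def lam_def[symmetric] Nd
    using assms(2) by simp
qed



lemma neg_aux1:
  fixes D a b c d e :: real
  shows "-D \<le> (-a + -c)*d - (-b + -c)*e \<Longrightarrow> D \<ge> (a + c)*d - (b + c)*e"
  by (simp add: algebra_simps)

lemma neg_aux2:
  fixes D a b c d e :: real
  shows "-D \<ge> (-a + -c)*d - (-b + -c)*e \<Longrightarrow> D \<le> (a + c)*d - (b + c)*e"
  by (simp add: algebra_simps)

theorem lemma4: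
  fixes f :: "real \<times> real \<Rightarrow> real" and fy :: "real \<Rightarrow> real \<Rightarrow> real"
    and k :: nat and m \<gamma> C0 :: real
  assumes hk: "k \<ge> 2"
    and hf: "Ck_on k ({0..1} \<times> UNIV) f"
    and hfy: "\<forall>x\<in>{0..1}. \<forall>u. ((\<lambda>w. f (x, w)) has_real_derivative fy x u) (at u)"
    and hm: "m > 0"
    and hfym: "\<forall>x\<in>{0..1}. \<forall>u. fy x u \<ge> m"
    and hgamma: "\<forall>x\<in>{0..1}. \<forall>u. \<gamma> \<ge> fy x u"
    and hC0: "C0 > 0"
  shows "\<exists>C>0. \<forall>\<epsilon> (N::nat) y.
           \<epsilon> > 0 \<and> N > 0 \<and> 4 dvd N
           \<and> 2 * \<epsilon> * ln (real N) / sqrt m \<le> 1 / 4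
           \<and> \<epsilon> \<le> C0 / real N
           \<and> is_solution \<epsilon> f y
           \<longrightarrow> \<bar>G_op \<gamma> \<epsilon> f N (shishkin_mesh \<epsilon> m N)
                    (\<lambda>i. y (shishkin_mesh \<epsilon> m N i)) (N div 4)\<bar> \<le> C / real N"
proof -
  obtain j where kj: "k = Suc j" using hk by (cases k) auto
  have hf': "Ck_on (Suc j) ({0..1} \<times> UNIV) f" using hf kj by simp
  have fc: "continuous_on ({0..1} \<times> UNIV) f" using ck_cont[OF hf'] .
  have gm: "\<gamma> \<ge> m" using hfym hgamma by (meson atLeastAtMost_iff order.trans zero_le_one order_refl)
  have g: "\<gamma> > 0" using gm hm by simp
  have c0: "continuous_on {0..1} (\<lambda>x. f (x, 0))"
    by (rule continuous_on_compose2[OF fc]) (auto intro!: continuous_intros)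
  obtain B0 where B0: "B0 \<ge> 0" "\<forall>x\<in>{0..1}. \<bar>f (x,0)\<bar> \<le> B0"
    using cont_bound[OF compact_Icc c0] by auto
  define M where "M = B0 / m"
  have M0: "M \<ge> 0" using B0 hm by (simp add: M_def)
  obtain B1 where B1: "B1 \<ge> 0"
    "\<forall>x\<in>{0..1}. \<forall>x'\<in>{0..1}. \<forall>u. \<bar>u\<bar> \<le> M \<longrightarrow> \<bar>f (x,u) - f (x',u)\<bar> \<le> B1 * \<bar>x - x'\<bar>"
    using lip_x[OF hf'] by blast
  have fu: "\<And>x u v. x \<in> {0..1} \<Longrightarrow> \<exists>b. m \<le> b \<and> b \<le> \<gamma> \<and> f (x,u) - f (x,v) = b * (u - v)"
    using fu_mvt[OF hfy hfym hgamma] by blast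
  define K1 where "K1 = 3*B1/m + 8*M + 8*M*C0/sqrt m"
  define W where "W = 3*B1 + 2*\<gamma>*K1"
  have K1: "K1 \<ge> 0" unfolding K1_def using B1 M0 hm hC0 by simp
  have W0: "W \<ge> 0" unfolding W_def using B1 K1 g by simp
  show ?thesis
  proof (intro exI[of _ "6*W+1"] conjI allI impI)
    show "6*W+1 > 0" using W0 by simp
    fix \<epsilon> :: real and N :: nat and y :: "real \<Rightarrow> real"
    assume A: "\<epsilon> > 0 \<and> N > 0 \<and> 4 dvd N \<and> 2 * \<epsilon> * ln (real N) / sqrt m \<le> 1 / 4
           \<and> \<epsilon> \<le> C0 / real N \<and> is_solution \<epsilon> f y"
    have e: "\<epsilon> > 0" and Npos: "N > 0" and dv: "4 dvd N" and laml: "2 * \<epsilon> * ln (real N) / sqrt m \<le> 1 / 4"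
      and eN: "\<epsilon> \<le> C0 / real N" and sol: "is_solution \<epsilon> f y" using A by auto
    obtain y1 y2 where cont: "continuous_on {0..1} y" and y0: "y 0 = 0" and y1: "y 1 = 0"
      and dy: "\<forall>x\<in>{0<..<1}. (y has_real_derivative y1 x) (at x) \<and> (y1 has_real_derivative y2 x) (at x)
                              \<and> \<epsilon>\<^sup>2 * y2 x = f (x, y x)"
      using sol unfolding is_solution_def by blast
    have d1: "\<And>x. 0<x \<Longrightarrow> x<1 \<Longrightarrow> (y has_real_derivative y1 x) (at x)" using dy by auto
    have d2: "\<And>x. 0<x \<Longrightarrow> x<1 \<Longrightarrow> (y1 has_real_derivative y2 x) (at x)" using dy by auto
    have eq: "\<And>x. 0<x \<Longrightarrow> x<1 \<Longrightarrow> \<epsilon>\<^sup>2 * y2 x = f (x, y x)" using dy by auto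
    have fu': "\<And>x u v. x \<in> {0..1} \<Longrightarrow> \<exists>b. m \<le> b \<and> f (x,u) - f (x,v) = b * (u - v)"
      using fu by blast
    have ybd: "\<And>x. x \<in> {0..1} \<Longrightarrow> \<bar>y x\<bar> \<le> M"
      unfolding M_def using ybound[OF e hm cont y0 y1 d1 d2 eq fu'] B0(2) by blast
    define i where "i = N div 4"
    have Ni: "N = 4 * i" using dv unfolding i_def by auto
    have i1: "i \<ge> 1" using Ni Npos by simp
    have rN: "real N = 4 * real i" using Ni by simp
    have N4: "real N \<ge> 4" using i1 rN by simp
    define lam where "lam = 2 * \<epsilon> * ln (real N) / sqrt m"
    have lnN: "ln (real N) > 0" using N4 by simp
    have lam0: "lam > 0" unfolding lam_def using e lnN hm by simp
    have lam1: "lam \<le> 1/4" using laml by (simp add: lam_def)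
    define h where "h = 4*lam/real N"
    define H where "H = 2*(1-2*lam)/real N"
    have h0: "h > 0" using lam0 N4 by (simp add: h_def)
    have h1: "h \<le> 1 / real N" using lam1 N4 by (simp add: h_def divide_right_mono)
    have hl: "h \<le> lam" using lam0 N4 by (simp add: h_def field_simps)
    have H0: "H > 0" using lam1 N4 by (simp add: H_def)
    have H1: "H \<le> 2 / real N" using lam0 N4 by (simp add: H_def divide_right_mono)
    have "2 / real N \<le> 1/2" using N4 by (simp add: field_simps)
    hence H2: "H \<le> 1/2" using H1 by linarith
    have xs: "shishkin_mesh \<epsilon> m N (i - 1) = lam - h" "shishkin_mesh \<epsilon> m N i = lam"
        "shishkin_mesh \<epsilon> m N (i + 1) = lam + H"
      using mesh_vals[OF Ni i1, of \<epsilon> m] by (simp_all add: lam_def h_def H_def)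
    have sl: "sqrt m * lam / \<epsilon> = 2 * ln (real N)" unfolding lam_def using e hm by simp
    have expb1: "exp (-(sqrt m * x/\<epsilon>)) \<le> 4 / real N" if x: "x \<ge> lam - h" for x
    proof -
      have lh: "lam - h = lam * (1 - 4/real N)" by (simp add: h_def algebra_simps)
      have "sqrt m * x / \<epsilon> \<ge> sqrt m * (lam - h) / \<epsilon>" using x e hm by (simp add: divide_right_mono)
      also have "sqrt m * (lam - h) / \<epsilon> = 2 * ln (real N) * (1 - 4/real N)"
      proof -
        have "sqrt m * (lam * (1 - 4/real N)) / \<epsilon> = (sqrt m * lam / \<epsilon>) * (1 - 4/real N)" by simp
        thus ?thesis unfolding lh sl .
      qed
      finally have a: "sqrt m * x / \<epsilon> \<ge> 2 * ln (real N) * (1 - 4/real N)" .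
      have b: "2 * ln (real N) * (1 - 4/real N) \<ge> ln (real N) - ln 4"
      proof (cases "i = 1")
        case True
        hence "real N = 4" using rN by simp
        thus ?thesis by simp
      next
        case False
        hence "real N \<ge> 8" using rN i1 by simp
        hence "1 - 4/real N \<ge> 1/2" by (simp add: field_simps)
        hence "2 * ln (real N) * (1 - 4/real N) \<ge> 2 * ln (real N) * (1/2)" using lnN
          by (intro mult_left_mono) auto
        moreover have "ln (4::real) \<ge> 0" by simp
        ultimately show ?thesis by linarith
      qed
      have "exp (-(sqrt m * x/\<epsilon>)) \<le> exp (ln 4 - ln (real N))" using a b by simp
      also have "\<dots> = 4 / real N" using N4 by (simp add: exp_diff)
      finally show ?thesis .
    qed
    have expb2: "exp (-(sqrt m * t/\<epsilon>)) \<le> 4 * C0 / (sqrt m * real N)" if t: "t \<ge> 1/4" for t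
    proof -
      have "sqrt m * t / \<epsilon> \<ge> sqrt m / (4 * \<epsilon>)" using t e hm by (simp add: field_simps)
      hence "exp (-(sqrt m * t/\<epsilon>)) \<le> exp (-(sqrt m / (4 * \<epsilon>)))" by simp
      also have "\<dots> \<le> 1 / (sqrt m / (4 * \<epsilon>))" using e hm by (intro exp_inv_bound) simp
      also have "\<dots> = 4 * \<epsilon> / sqrt m" by simp
      also have "\<dots> \<le> 4 * (C0 / real N) / sqrt m" using eN hm by (intro divide_right_mono) auto
      also have "\<dots> = 4 * C0 / (sqrt m * real N)" by simp
      finally show ?thesis .
    qed
    have oscy: "\<bar>y q - y p\<bar> \<le> K1 / real N" if pq: "lam - h \<le> p" "p < q" "q \<le> lam + H" for p q
    proof -
      define \<delta> where "\<delta> = q - p"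
      have dl: "\<delta> \<le> 3 / real N" using pq h1 H1 by (simp add: \<delta>_def)
      have "3 / real N \<le> 3/4" using N4 by (simp add: field_simps)
      hence d01: "0 < \<delta>" "\<delta> < 1" using dl pq by (auto simp: \<delta>_def)
      have p0: "0 \<le> p" using pq hl by simp
      have q1: "q \<le> 3/4" using pq lam1 H2 by simp
      have "\<bar>y (p+\<delta>) - y p\<bar> \<le> B1*\<delta>/m + 2*M*(exp (-(sqrt m * p/\<epsilon>)) + exp (-(sqrt m*(1-\<delta>-p)/\<epsilon>)))"
        by (rule ydiff[OF e hm cont y0 y1 d1 d2 eq fu' ybd B1(1) _ d01 p0])
           (use B1(2) q1 in \<open>auto simp: \<delta>_def\<close>)
      also have "\<dots> \<le> B1*(3 / real N)/m + 2*M*(4 / real N + 4 * C0 / (sqrt m * real N))"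
      proof -
        have u1: "B1 * \<delta> / m \<le> B1 * (3 / real N) / m" using dl B1(1) hm
          by (intro divide_right_mono mult_left_mono) auto
        have u2: "exp (-(sqrt m * p/\<epsilon>)) \<le> 4 / real N" using expb1 pq by simp
        have u3: "exp (-(sqrt m*(1-\<delta>-p)/\<epsilon>)) \<le> 4 * C0 / (sqrt m * real N)"
          using expb2[of "1-\<delta>-p"] q1 by (simp add: \<delta>_def)
        have "2*M*(exp (-(sqrt m * p/\<epsilon>)) + exp (-(sqrt m*(1-\<delta>-p)/\<epsilon>))) \<le> 2*M*(4 / real N + 4 * C0 / (sqrt m * real N))"
          using u2 u3 M0 by (intro mult_left_mono) auto
        thus ?thesis using u1 by linarith
      qed
      also have "\<dots> = K1 / real N" unfolding K1_def using hm N4 by (simp add: field_simps)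
      finally show ?thesis by (simp add: \<delta>_def)
    qed
    have oscy': "\<bar>y x - y lam\<bar> \<le> K1 / real N" if x: "lam - h \<le> x" "x \<le> lam + H" for x
    proof (cases x lam rule: linorder_cases)
      case less thus ?thesis using oscy[of x lam] x H0 by (simp add: abs_minus_commute)
    next
      case equal thus ?thesis using K1 N4 by simp
    next
      case greater thus ?thesis using oscy[of lam x] x h0 by simp
    qed
    have oscF: "\<bar>(f (x, y x) - \<gamma> * y x) - (f (lam, y lam) - \<gamma> * y lam)\<bar> \<le> W / real N"
      if x: "lam - h \<le> x" "x \<le> lam + H" for x
    proof -
      have x01: "x \<in> {0..1}" "lam \<in> {0..1}" using x hl lam0 lam1 H2 by auto
      have a: "\<bar>f (x, y x) - f (lam, y x)\<bar> \<le> B1 * \<bar>x - lam\<bar>" using B1(2) x01 ybd by blast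
      have "\<bar>x - lam\<bar> \<le> 3 / real N" using x h1 H1 by (simp add: abs_le_iff)
      hence a': "\<bar>f (x, y x) - f (lam, y x)\<bar> \<le> B1 * (3 / real N)" using a B1(1)
        by (meson mult_left_mono order.trans)
      obtain b where b: "m \<le> b" "b \<le> \<gamma>" "f (lam, y x) - f (lam, y lam) = b * (y x - y lam)"
        using fu[of lam "y x" "y lam"] x01 by blast
      have "\<bar>f (lam, y x) - f (lam, y lam)\<bar> = b * \<bar>y x - y lam\<bar>" using b hm by (simp add: abs_mult)
      also have "\<dots> \<le> \<gamma> * \<bar>y x - y lam\<bar>" using b by (intro mult_right_mono) auto
      finally have c: "\<bar>f (lam, y x) - f (lam, y lam)\<bar> \<le> \<gamma> * (K1 / real N)"
        using oscy'[OF x] g by (meson mult_left_mono order.trans less_imp_le)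
      have d: "\<bar>\<gamma> * y x - \<gamma> * y lam\<bar> \<le> \<gamma> * (K1 / real N)"
      proof -
        have "\<bar>\<gamma> * y x - \<gamma> * y lam\<bar> = \<gamma> * \<bar>y x - y lam\<bar>" using g
          by (simp add: abs_mult right_diff_distrib[symmetric])
        also have "\<dots> \<le> \<gamma> * (K1 / real N)" using oscy'[OF x] g by (intro mult_left_mono) auto
        finally show ?thesis .
      qed
      have "\<bar>(f (x, y x) - \<gamma> * y x) - (f (lam, y lam) - \<gamma> * y lam)\<bar>
          \<le> \<bar>f (x, y x) - f (lam, y x)\<bar> + \<bar>f (lam, y x) - f (lam, y lam)\<bar> + \<bar>\<gamma> * y x - \<gamma> * y lam\<bar>"
        by (smt (verit))
      also have "\<dots> \<le> B1 * (3 / real N) + \<gamma> * (K1 / real N) + \<gamma> * (K1 / real N)"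
        using a' c d by linarith
      also have "\<dots> = W / real N" unfolding W_def using N4 by (simp add: field_simps)
      finally show ?thesis .
    qed
    define \<beta> where "\<beta> = sqrt \<gamma> / \<epsilon>"
    have b0: "\<beta> > 0" unfolding \<beta>_def using g e by simp
    define aL where "aL = \<beta> / sinh (\<beta> * h)"
    define dL where "dL = \<beta> / tanh (\<beta> * h)"
    define aR where "aR = \<beta> / sinh (\<beta> * H)"
    define dR where "dR = \<beta> / tanh (\<beta> * H)"
    define ym where "ym = y (lam - h)"
    define y00 where "y00 = y lam"
    define yp where "yp = y (lam + H)"
    define fm where "fm = f (lam - h, ym)"
    define f0 where "f0 = f (lam, y00)"
    define fp where "fp = f (lam + H, yp)"
    define Wn where "Wn = W / real N"
    have conv: "\<And>z t. z * \<beta> * cosh t / sinh t = z * (\<beta> / tanh t)" "\<And>z t. z * \<beta> / sinh t = z * (\<beta> / sinh t)"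
      by (simp_all add: tanh_def)
    have hs: "lam - (lam - h) = h" "lam + H - lam = H" by simp_all
    have l01: "0 < lam" "lam < 1" using lam0 lam1 by auto
    have Dl: "(y has_real_derivative y1 lam) (at lam)" using d1 l01 by blast
    have Dln: "((\<lambda>x. - y x) has_real_derivative - y1 lam) (at lam)" using Dl by (intro derivative_intros)
    have contL: "continuous_on {lam-h..lam} y" by (rule continuous_on_subset[OF cont]) (use hl lam1 in auto)
    have contR: "continuous_on {lam..lam+H} y" by (rule continuous_on_subset[OF cont]) (use lam0 lam1 H2 in auto)
    have contLn: "continuous_on {lam-h..lam} (\<lambda>x. - y x)" using contL by (intro continuous_intros)
    have contRn: "continuous_on {lam..lam+H} (\<lambda>x. - y x)" using contR by (intro continuous_intros)
    have inside: "0 < x \<and> x < 1" if "lam - h < x" "x < lam + H" for x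
      using that hl lam1 H2 by auto
    have lep: "\<epsilon>\<^sup>2 * y2 x - \<gamma> * y x \<le> f0 - \<gamma>*y00 + Wn" if "lam - h < x" "x < lam + H" for x
      using eq[of x] inside[OF that] oscF[of x] that unfolding f0_def y00_def Wn_def by (auto simp: abs_le_iff)
    have lem: "\<epsilon>\<^sup>2 * (- y2 x) - \<gamma> * (- y x) \<le> - (f0 - \<gamma>*y00 - Wn)" if "lam - h < x" "x < lam + H" for x
      using eq[of x] inside[OF that] oscF[of x] that unfolding f0_def y00_def Wn_def by (auto simp: abs_le_iff)
    have d1n: "((\<lambda>x. - y x) has_real_derivative - y1 x) (at x)" if "0 < x" "x < 1" for x
      using d1[OF that] by (intro derivative_intros)
    have d2n: "((\<lambda>x. - y1 x) has_real_derivative - y2 x) (at x)" if "0 < x" "x < 1" for x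
      using d2[OF that] by (intro derivative_intros)
    have Lp0: "y1 lam \<le> (y lam + (f0 - \<gamma>*y00 + Wn)/\<gamma>) * (sqrt \<gamma> / \<epsilon>) * cosh (sqrt \<gamma> / \<epsilon> * (lam - (lam - h))) / sinh (sqrt \<gamma> / \<epsilon> * (lam - (lam - h)))
        - (y (lam - h) + (f0 - \<gamma>*y00 + Wn)/\<gamma>) * (sqrt \<gamma> / \<epsilon>) / sinh (sqrt \<gamma> / \<epsilon> * (lam - (lam - h)))"
      by (rule cmp_side(1)[OF e g _ contL d1 d2 lep Dl]) (use h0 H0 hl lam0 lam1 H2 in auto)
    have Lp: "y1 lam \<le> (y00 + (f0 - \<gamma>*y00 + Wn)/\<gamma>)*dL - (ym + (f0 - \<gamma>*y00 + Wn)/\<gamma>)*aL"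
      using Lp0 unfolding \<beta>_def[symmetric] hs conv aL_def[symmetric] dL_def[symmetric] y00_def ym_def .
    have Lm0: "- y1 lam \<le> (- y lam + (- (f0 - \<gamma>*y00 - Wn))/\<gamma>) * (sqrt \<gamma> / \<epsilon>) * cosh (sqrt \<gamma> / \<epsilon> * (lam - (lam - h))) / sinh (sqrt \<gamma> / \<epsilon> * (lam - (lam - h)))
        - (- y (lam - h) + (- (f0 - \<gamma>*y00 - Wn))/\<gamma>) * (sqrt \<gamma> / \<epsilon>) / sinh (sqrt \<gamma> / \<epsilon> * (lam - (lam - h)))"
      by (rule cmp_side(1)[OF e g _ contLn d1n d2n lem Dln]) (use h0 H0 hl lam0 lam1 H2 in auto)
    have Lm1: "- y1 lam \<le> (- y00 + (- (f0 - \<gamma>*y00 - Wn))/\<gamma>)*dL - (- ym + (- (f0 - \<gamma>*y00 - Wn))/\<gamma>)*aL"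
      using Lm0 unfolding \<beta>_def[symmetric] hs conv aL_def[symmetric] dL_def[symmetric] y00_def ym_def .
    have Lm: "y1 lam \<ge> (y00 + (f0 - \<gamma>*y00 - Wn)/\<gamma>)*dL - (ym + (f0 - \<gamma>*y00 - Wn)/\<gamma>)*aL"
      using Lm1 by (intro neg_aux1) (simp only: minus_divide_left)
    have Rp0: "y1 lam \<ge> (y (lam + H) + (f0 - \<gamma>*y00 + Wn)/\<gamma>) * (sqrt \<gamma> / \<epsilon>) / sinh (sqrt \<gamma> / \<epsilon> * (lam + H - lam))
        - (y lam + (f0 - \<gamma>*y00 + Wn)/\<gamma>) * (sqrt \<gamma> / \<epsilon>) * cosh (sqrt \<gamma> / \<epsilon> * (lam + H - lam)) / sinh (sqrt \<gamma> / \<epsilon> * (lam + H - lam))"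
      by (rule cmp_side(2)[OF e g _ contR d1 d2 lep Dl]) (use h0 H0 hl lam0 lam1 H2 in auto)
    have Rp: "y1 lam \<ge> (yp + (f0 - \<gamma>*y00 + Wn)/\<gamma>)*aR - (y00 + (f0 - \<gamma>*y00 + Wn)/\<gamma>)*dR"
      using Rp0 unfolding \<beta>_def[symmetric] hs conv aR_def[symmetric] dR_def[symmetric] y00_def yp_def .
    have Rm0: "- y1 lam \<ge> (- y (lam + H) + (- (f0 - \<gamma>*y00 - Wn))/\<gamma>) * (sqrt \<gamma> / \<epsilon>) / sinh (sqrt \<gamma> / \<epsilon> * (lam + H - lam))
        - (- y lam + (- (f0 - \<gamma>*y00 - Wn))/\<gamma>) * (sqrt \<gamma> / \<epsilon>) * cosh (sqrt \<gamma> / \<epsilon> * (lam + H - lam)) / sinh (sqrt \<gamma> / \<epsilon> * (lam + H - lam))"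
      by (rule cmp_side(2)[OF e g _ contRn d1n d2n lem Dln]) (use h0 H0 hl lam0 lam1 H2 in auto)
    have Rm1: "- y1 lam \<ge> (- yp + (- (f0 - \<gamma>*y00 - Wn))/\<gamma>)*aR - (- y00 + (- (f0 - \<gamma>*y00 - Wn))/\<gamma>)*dR"
      using Rm0 unfolding \<beta>_def[symmetric] hs conv aR_def[symmetric] dR_def[symmetric] y00_def yp_def .
    have Rm: "y1 lam \<le> (yp + (f0 - \<gamma>*y00 - Wn)/\<gamma>)*aR - (y00 + (f0 - \<gamma>*y00 - Wn)/\<gamma>)*dR"
      using Rm1 by (intro neg_aux2) (simp only: minus_divide_left)
    have om: "\<bar>(fm - \<gamma>*ym) - (f0 - \<gamma>*y00)\<bar> \<le> Wn"
      using oscF[of "lam - h"] H0 h0 unfolding fm_def f0_def ym_def y00_def Wn_def by simp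
    have op: "\<bar>(fp - \<gamma>*yp) - (f0 - \<gamma>*y00)\<bar> \<le> Wn"
      using oscF[of "lam + H"] H0 h0 unfolding fp_def f0_def yp_def y00_def Wn_def by simp
    have sL: "dL - aL > 0" unfolding dL_def aL_def using dd_pos[OF b0 h0] .
    have sR: "dR - aR > 0" unfolding dR_def aR_def using dd_pos[OF b0 H0] .
    note fin = final_alg[OF g sL sR Lp Rp Lm Rm om op]
    have Geq: "G_op \<gamma> \<epsilon> f N (shishkin_mesh \<epsilon> m N) (\<lambda>i. y (shishkin_mesh \<epsilon> m N i)) (N div 4)
       = \<gamma> / ((dL-aL)+(dR-aR)) * ((3*aL + dL + (dR-aR))*(ym-y00) - (3*aR+dR+(dL-aL))*(y00-yp)
           - (fm+2*f0+fp)/\<gamma>*((dL-aL)+(dR-aR)))"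
    proof -
      have "i \<noteq> 0" "i \<noteq> N" using i1 Ni by auto
      moreover have xs': "shishkin_mesh \<epsilon> m N (i - Suc 0) = lam - h" "shishkin_mesh \<epsilon> m N (Suc i) = lam + H"
        using xs by simp_all
      ultimately show ?thesis unfolding G_op_def Let_def i_def[symmetric] \<beta>_def[symmetric]
        by (simp add: xs xs' hs aL_def dL_def aR_def dR_def ym_def y00_def yp_def fm_def f0_def fp_def)
    qed
    have "6 * Wn \<le> (6*W+1) / real N" unfolding Wn_def using N4 by (simp add: field_simps)
    thus "\<bar>G_op \<gamma> \<epsilon> f N (shishkin_mesh \<epsilon> m N) (\<lambda>i. y (shishkin_mesh \<epsilon> m N i)) (N div 4)\<bar> \<le> (6*W+1) / real N"
      using fin unfolding Geq by linarith
  qed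
qed


end
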